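(* Let $\mathcal H$ be a separable Hilbert space, $(X,\mathcal M,\mu)$ a $\sigma$-finite measure space, and $\{\phi_t\}_{t\in X}$ a continuous Bessel family over $X$ in $\mathcal H$. Let $\mathcal M'\subset\mathcal M$ be the $\sigma$-algebra generated by the sets $\{t\in X:\phi_t\in U\}$, where $U$ ranges over open subsets of $\mathcal H$. Then the measure algebra associated with $(X,\mathcal M',\mu)$ is separable.
   Context: A family $\{\phi_t\}_{t\in X}$ of vectors in $\mathcal H$ is a continuous Bessel family (with bound $B$) over the measure space $(X,\mu)$ if (i) for each $f\in\mathcal H$ the function $t\mapsto\langle f,\phi_t\rangle$ is measurable, and (ii) there is $B<\infty$ with $\int_X|\langle f,\phi_t\rangle|^2\,d\mu(t)\le B\|f\|^2$ for all $f\in\mathcal H$. The measure algebra of a measure space $(X,\mathcal N,\mu)$ consists of equivalence classes of sets in $\mathcal N$ under $E\sim F\iff\mu(E\triangle F)=0$; it is called separable if the set of (classes of) sets of finite measure with the metric $\rho(E,F)=\mu(E\triangle F)$ is a separable metric space. *)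

theory Defs
  imports "HOL-Analysis.Analysis"
begin

definition continuous_bessel_family :: "'b measure \<Rightarrow> ('b \<Rightarrow> 'a::real_inner) \<Rightarrow> bool" where
  "continuous_bessel_family M \<phi> \<longleftrightarrow>
     (\<forall>f. (\<lambda>t. inner f (\<phi> t)) \<in> borel_measurable M) \<and>
     (\<exists>B::real. \<forall>f. (\<integral>\<^sup>+ t. ennreal ((inner f (\<phi> t))\<^sup>2) \<partial>M) \<le> ennreal (B * (norm f)\<^sup>2))"

text \<open>Separability of the measure algebra of (space M, A, emeasure M restricted to A):
  the sets of A of finite measure, with pseudometric mu(E symdiff F), form a separable space.
  (Passing to the quotient by null sets does not affect separability.)\<close>
definition separable_measure_algebra :: "'b measure \<Rightarrow> 'b set set \<Rightarrow> bool" where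
  "separable_measure_algebra M A \<longleftrightarrow>
     (\<exists>D. countable D \<and> D \<subseteq> {E \<in> A. emeasure M E < \<infinity>} \<and>
        (\<forall>E \<in> A. emeasure M E < \<infinity> \<longrightarrow>
           (\<forall>e::real. e > 0 \<longrightarrow> (\<exists>F \<in> D. emeasure M ((E - F) \<union> (F - E)) < ennreal e))))"

end

theory Submission
  imports Defs
begin
lemma approx_sigma:
  fixes M :: "'b measure"
  assumes Alg_sets: "Alg \<subseteq> sets M"
    and Alg_empty: "{} \<in> Alg"
    and Alg_compl: "\<And>a. a \<in> Alg \<Longrightarrow> space M - a \<in> Alg"
    and Alg_un: "\<And>a b. a \<in> Alg \<Longrightarrow> b \<in> Alg \<Longrightarrow> a \<union> b \<in> Alg"
    and G_Alg: "G \<subseteq> Alg"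
    and F: "F \<in> fmeasurable M"
    and E: "E \<in> sigma_sets (space M) G"
  shows "\<forall>e>0. \<exists>H\<in>Alg. measure M (((E - H) \<union> (H - E)) \<inter> F) < e"
  using E
proof (induction rule: sigma_sets.induct)
  case (Basic a)
  then show ?case using G_Alg by (intro allI impI bexI[of _ a]) auto
next
  case Empty
  then show ?case using Alg_empty by (intro allI impI bexI[of _ "{}"]) auto
next
  case (Compl a)
  have sub: "G \<subseteq> Pow (space M)" using G_Alg Alg_sets sets.sets_into_space by blast
  have asub: "a \<subseteq> space M" using sigma_sets_into_sp[OF sub Compl.hyps] .
  show ?case
  proof (intro allI impI)
    fix e :: real assume "e > 0"
    then obtain H where H: "H \<in> Alg" "measure M (((a - H) \<union> (H - a)) \<inter> F) < e" using Compl.IH by blast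
    have Hs: "H \<subseteq> space M" using H(1) Alg_sets sets.sets_into_space by blast
    have eq: "((space M - a) - (space M - H)) \<union> ((space M - H) - (space M - a)) = (a - H) \<union> (H - a)"
      using asub Hs by blast
    show "\<exists>H\<in>Alg. measure M (((space M - a - H) \<union> (H - (space M - a))) \<inter> F) < e"
      using H eq Alg_compl[OF H(1)] by (intro bexI[of _ "space M - H"]) auto
  qed
next
  case (Union A)
  have Asets: "A i \<in> sets M" for i
    using Union.hyps sets.sigma_sets_subset[of G M] G_Alg Alg_sets by blast
  show ?case
  proof (intro allI impI)
    fix e :: real assume e: "e > 0"
    define T where "T N = ((\<Union>i. A i) - (\<Union>i<N. A i)) \<inter> F" for N
    have Fs: "F \<in> sets M" using F by (simp add: fmeasurable_def)
    have Ts: "range T \<subseteq> sets M" using Asets Fs unfolding T_def by (intro image_subsetI sets.Int sets.Diff sets.countable_UN sets.finite_UN) auto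
    have Tdec: "decseq T" by (rule decseq_SucI) (auto simp: T_def lessThan_Suc)
    have Tfin: "emeasure M (T i) \<noteq> \<infinity>" for i
    proof -
      have "T i \<subseteq> F" unfolding T_def by blast
      moreover have "T i \<in> sets M" using Ts by blast
      ultimately have "T i \<in> fmeasurable M" using F by (rule fmeasurableI2[rotated])
      then show ?thesis by (auto simp: fmeasurable_def)
    qed
    have Tint: "(\<Inter>i. T i) = {}" unfolding T_def by auto
    have "(\<lambda>n. measure M (T n)) \<longlonglongrightarrow> 0"
      using Lim_measure_decseq[OF Ts Tdec Tfin] Tint by simp
    then obtain N where N: "measure M (T N) < e/2"
      using e by (metis (no_types, lifting) LIMSEQ_D abs_of_nonneg diff_zero half_gt_zero le_refl measure_nonneg real_norm_def)
    define d where "d = e / (2 * (real N + 1))"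
    have d: "d > 0" using e by (simp add: d_def)
    have "\<forall>i. \<exists>H\<in>Alg. measure M (((A i - H) \<union> (H - A i)) \<inter> F) < d" using Union.IH d by blast
    then obtain H where H: "\<And>i. H i \<in> Alg" "\<And>i. measure M (((A i - H i) \<union> (H i - A i)) \<inter> F) < d"
      by metis
    define H' where "H' = (\<Union>i<N. H i)"
    have H'Alg: "(\<Union>i<n. H i) \<in> Alg" for n
    proof (induction n)
      case 0 then show ?case using Alg_empty by simp
    next
      case (Suc n)
      have "(\<Union>i<Suc n. H i) = H n \<union> (\<Union>i<n. H i)" by (auto simp: lessThan_Suc)
      then show ?case using Alg_un[OF H(1) Suc] by simp
    qed
    have sub: "(((\<Union>i. A i) - H') \<union> (H' - (\<Union>i. A i))) \<inter> F \<subseteq> T N \<union> (\<Union>i<N. ((A i - H i) \<union> (H i - A i)) \<inter> F)"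
      unfolding T_def H'_def by blast
    have Hs: "H i \<in> sets M" for i using H(1) Alg_sets by blast
    have Ssets: "((A i - H i) \<union> (H i - A i)) \<inter> F \<in> sets M" for i
      using Asets Hs Fs by (intro sets.Int sets.Un sets.Diff) auto
    have RHSsub: "T N \<union> (\<Union>i<N. ((A i - H i) \<union> (H i - A i)) \<inter> F) \<subseteq> F" unfolding T_def by blast
    have RHSs: "T N \<union> (\<Union>i<N. ((A i - H i) \<union> (H i - A i)) \<inter> F) \<in> sets M"
      using Ts Ssets by (intro sets.Un sets.finite_UN) auto
    have RHSfm: "T N \<union> (\<Union>i<N. ((A i - H i) \<union> (H i - A i)) \<inter> F) \<in> fmeasurable M"
      using F RHSsub RHSs by (rule fmeasurableI2)
    have "measure M ((((\<Union>i. A i) - H') \<union> (H' - (\<Union>i. A i))) \<inter> F)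
        \<le> measure M (T N \<union> (\<Union>i<N. ((A i - H i) \<union> (H i - A i)) \<inter> F))"
    proof (rule measure_mono_fmeasurable[OF sub _ RHSfm])
      have "H' \<in> sets M" using H'Alg Alg_sets unfolding H'_def by blast
      moreover have "(\<Union>i. A i) \<in> sets M" using Asets by blast
      ultimately show "(((\<Union>i. A i) - H') \<union> (H' - (\<Union>i. A i))) \<inter> F \<in> sets M"
        using F by (auto simp: fmeasurable_def)
    qed
    also have "\<dots> \<le> measure M (T N) + measure M (\<Union>i<N. ((A i - H i) \<union> (H i - A i)) \<inter> F)"
      using Ts Ssets by (intro measure_Un_le sets.finite_UN) auto
    also have "\<dots> \<le> measure M (T N) + (\<Sum>i<N. measure M (((A i - H i) \<union> (H i - A i)) \<inter> F))"
      using Ssets by (intro add_left_mono measure_UNION_le) auto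
    also have "\<dots> \<le> measure M (T N) + (\<Sum>i<N. d)" using H(2) by (intro add_left_mono sum_mono) (simp add: less_imp_le)
    also have "\<dots> < e / 2 + e / 2"
    proof -
      have "(\<Sum>i<N. d) = real N * d" by simp
      also have "\<dots> \<le> e / 2" using e unfolding d_def by (simp add: field_simps)
      finally show ?thesis using N by linarith
    qed
    finally show "\<exists>H\<in>Alg. measure M ((((\<Union>i. A i) - H) \<union> (H - (\<Union>i. A i))) \<inter> F) < e"
      using N H'Alg unfolding H'_def by (intro bexI[of _ "\<Union>i<N. H i"]) auto
  qed
qed

lemma norm_le_char:
  fixes y :: "'a::real_inner"
  assumes D: "closure D = UNIV" and r: "r \<ge> 0"
  shows "norm y \<le> r \<longleftrightarrow> (\<forall>f\<in>D. inner f y \<le> r * norm f)"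
proof
  assume "norm y \<le> r"
  then show "\<forall>f\<in>D. inner f y \<le> r * norm f"
    by (metis Cauchy_Schwarz_ineq2 abs_le_D1 mult.commute mult_left_mono norm_ge_zero order_trans)
next
  assume H: "\<forall>f\<in>D. inner f y \<le> r * norm f"
  have cl: "closed {f. inner f y \<le> r * norm f}"
    by (intro closed_Collect_le continuous_intros)
  have "D \<subseteq> {f. inner f y \<le> r * norm f}" using H by auto
  then have "closure D \<subseteq> {f. inner f y \<le> r * norm f}" using cl by (rule closure_minimal)
  then have "inner y y \<le> r * norm y" using D by auto
  then have "norm y * norm y \<le> r * norm y" by (simp add: dot_square_norm power2_eq_square)
  then show "norm y \<le> r" using r
    by (cases "norm y = 0") (auto simp: mult_le_cancel_right)
qed

lemma nonzero_witness:
  fixes y :: "'a::real_inner"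
  assumes D: "closure D = UNIV" and y: "y \<noteq> 0"
  shows "\<exists>f\<in>D. inner f y \<noteq> 0"
proof (rule ccontr)
  assume "\<not> ?thesis"
  then have "D \<subseteq> {f. inner f y = 0}" by auto
  moreover have "closed {f. inner f y = 0}" by (intro closed_Collect_eq continuous_intros)
  ultimately have "closure D \<subseteq> {f. inner f y = 0}" by (rule closure_minimal)
  then have "y \<in> {f. inner f y = 0}" using D by blast
  then have "inner y y = 0" by simp
  then show False using y by simp
qed

lemma cball_meas:
  fixes \<phi> :: "'b \<Rightarrow> 'a::real_inner" and D :: "'a set"
  assumes D: "closure D = UNIV" "countable D"
    and meas: "\<And>f. (\<lambda>t. inner f (\<phi> t)) \<in> borel_measurable M"
    and r: "r \<ge> 0"
  shows "{t \<in> space M. \<phi> t \<in> cball d r} \<in> sets M"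
proof -
  have eq: "{t \<in> space M. \<phi> t \<in> cball d r} = {t \<in> space M. \<forall>f\<in>D. inner f d - inner f (\<phi> t) \<le> r * norm f}"
    using norm_le_char[OF D(1) r] by (auto simp: dist_norm inner_diff_right)
  have "{t \<in> space M. inner f d - inner f (\<phi> t) \<le> r * norm f} \<in> sets M" for f
    using meas[of f] by measurable
  then show ?thesis unfolding eq by (intro sets.sets_Collect_countable_All' D(2))
qed

lemma preimage_form:
  fixes \<phi> :: "'b \<Rightarrow> 'a::topological_space"
  assumes "E \<in> sigma_sets \<Omega> {{t \<in> \<Omega>. \<phi> t \<in> U} | U. open U}"
  shows "\<exists>S. E = {t \<in> \<Omega>. \<phi> t \<in> S}"
  using assms
proof (induction rule: sigma_sets.induct)
  case (Basic a) then show ?case by blast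
next
  case Empty then show ?case by (intro exI[of _ "{}"]) auto
next
  case (Compl a)
  then obtain S where "a = {t \<in> \<Omega>. \<phi> t \<in> S}" by blast
  then show ?case by (intro exI[of _ "- S"]) auto
next
  case (Union A)
  then obtain S where "\<And>i. A i = {t \<in> \<Omega>. \<phi> t \<in> S i}" by metis
  then show ?case by (intro exI[of _ "\<Union>i. S i"]) auto
qed

lemma level_finite:
  fixes \<phi> :: "'b \<Rightarrow> 'a::real_inner"
  assumes bessel: "continuous_bessel_family M \<phi>"
  shows "emeasure M {t \<in> space M. 1 \<le> real (Suc n) * (inner f (\<phi> t))\<^sup>2} < \<infinity>"
proof -
  from bessel obtain B where B: "(\<integral>\<^sup>+ t. ennreal ((inner f (\<phi> t))\<^sup>2) \<partial>M) \<le> ennreal (B * (norm f)\<^sup>2)"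
    unfolding continuous_bessel_family_def by blast
  have meas: "(\<lambda>t. inner f (\<phi> t)) \<in> borel_measurable M"
    using bessel unfolding continuous_bessel_family_def by blast
  define c :: ennreal where "c = ennreal (real (Suc n))"
  let ?u = "\<lambda>t. ennreal ((inner f (\<phi> t))\<^sup>2)"
  have "emeasure M {x \<in> space M. 1 \<le> c * ?u x} \<le> c * (\<integral>\<^sup>+ x. ?u x * indicator (space M) x \<partial>M)"
    using meas by (intro nn_integral_Markov_inequality) auto
  also have "(\<integral>\<^sup>+ x. ?u x * indicator (space M) x \<partial>M) = (\<integral>\<^sup>+ x. ?u x \<partial>M)"
    by (intro nn_integral_cong) auto
  also have "c * \<dots> \<le> c * ennreal (B * (norm f)\<^sup>2)" using B by (intro mult_left_mono) auto
  also have "\<dots> < \<infinity>" unfolding c_def by (simp add: ennreal_mult_less_top)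
  finally have fin: "emeasure M {x \<in> space M. 1 \<le> c * ?u x} < \<infinity>" .
  have sub: "{t \<in> space M. 1 \<le> real (Suc n) * (inner f (\<phi> t))\<^sup>2} \<subseteq> {x \<in> space M. 1 \<le> c * ?u x}"
  proof safe
    fix x assume "x \<in> space M" "1 \<le> real (Suc n) * (inner f (\<phi> x))\<^sup>2"
    then have le: "ennreal 1 \<le> ennreal (real (Suc n) * (inner f (\<phi> x))\<^sup>2)" by (intro ennreal_leI)
    have eq: "c * ?u x = ennreal (real (Suc n) * (inner f (\<phi> x))\<^sup>2)"
      unfolding c_def by (rule ennreal_mult[symmetric]) auto
    show "1 \<le> c * ?u x" unfolding eq using le by (simp only: ennreal_1)
  qed
  have "{x \<in> space M. 1 \<le> c * ?u x} \<in> sets M" using meas by measurable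
  then show ?thesis using emeasure_mono[OF sub] fin by (meson le_less_trans)
qed

datatype expr = EB nat | EEmp | ECp expr | EUn expr expr

instance expr :: countable by countable_datatype

fun ev :: "'b set \<Rightarrow> (nat \<Rightarrow> 'b set) \<Rightarrow> expr \<Rightarrow> 'b set" where
  "ev \<Omega> g (EB n) = g n"
| "ev \<Omega> g EEmp = {}"
| "ev \<Omega> g (ECp x) = \<Omega> - ev \<Omega> g x"
| "ev \<Omega> g (EUn x y) = ev \<Omega> g x \<union> ev \<Omega> g y"

lemma ev_sigma: "range g \<subseteq> sigma_sets \<Omega> G \<Longrightarrow> ev \<Omega> g x \<in> sigma_sets \<Omega> G"
  by (induction x) (auto intro: sigma_sets.intros sigma_sets_Un)

theorem proposition2p3:
  fixes M :: "'b measure" and \<phi> :: "'b \<Rightarrow> 'a::{real_inner, complete_space}"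
  assumes separable: "\<exists>D::'a set. countable D \<and> closure D = UNIV"
    and sigma_finite: "sigma_finite_measure M"
    and bessel: "continuous_bessel_family M \<phi>"
  shows "sigma_sets (space M) {{t \<in> space M. \<phi> t \<in> U} | U. open U} \<subseteq> sets M
         \<and> separable_measure_algebra M (sigma_sets (space M) {{t \<in> space M. \<phi> t \<in> U} | U. open U})"
proof -
  define \<Omega> where "\<Omega> = space M"
  define G where "G = {{t \<in> space M. \<phi> t \<in> U} | U. open U}"
  define A where "A = sigma_sets (space M) G"
  obtain D :: "'a set" where Dc: "countable D" and Dd: "closure D = UNIV" using separable by blast
  have Dne: "D \<noteq> {}" using Dd by auto
  have meas: "\<And>f. (\<lambda>t. inner f (\<phi> t)) \<in> borel_measurable M"
    using bessel unfolding continuous_bessel_family_def by blast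
  define G0 where "G0 = (\<lambda>(d, q). {t \<in> space M. \<phi> t \<in> cball d (real_of_rat q)}) ` (D \<times> {q. 0 < q})"
  have G0c: "countable G0" unfolding G0_def using Dc by auto
  have G0ne: "G0 \<noteq> {}" unfolding G0_def using Dne zero_less_one[where 'a=rat] by blast
  have G0sets: "G0 \<subseteq> sets M"
    unfolding G0_def using cball_meas[OF Dd Dc meas] by (auto simp: less_imp_le)
  have G0A: "G0 \<subseteq> A"
  proof
    fix X assume "X \<in> G0"
    then obtain d r where X: "X = {t \<in> space M. \<phi> t \<in> cball d r}" unfolding G0_def by auto
    have "{t \<in> space M. \<phi> t \<in> - cball d r} \<in> G" unfolding G_def by blast
    then have "space M - {t \<in> space M. \<phi> t \<in> - cball d r} \<in> A" unfolding A_def by (blast intro: sigma_sets.intros)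
    moreover have "space M - {t \<in> space M. \<phi> t \<in> - cball d r} = X" unfolding X by auto
    ultimately show "X \<in> A" by simp
  qed
  have GG0: "G \<subseteq> sigma_sets (space M) G0"
  proof
    fix X assume "X \<in> G"
    then obtain U where U: "open U" "X = {t \<in> space M. \<phi> t \<in> U}" unfolding G_def by blast
    define K where "K = {(d, q). d \<in> D \<and> 0 < q \<and> cball d (real_of_rat q) \<subseteq> U}"
    have Kc: "countable K"
      by (rule countable_subset[of _ "D \<times> UNIV"]) (use Dc in \<open>auto simp: K_def\<close>)
    have Ueq: "U = (\<Union>(d, q)\<in>K. cball d (real_of_rat q))"
    proof
      show "(\<Union>(d, q)\<in>K. cball d (real_of_rat q)) \<subseteq> U" unfolding K_def by auto
      show "U \<subseteq> (\<Union>(d, q)\<in>K. cball d (real_of_rat q))"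
      proof
        fix x assume "x \<in> U"
        then obtain e where e: "e > 0" "ball x e \<subseteq> U" using U(1) open_contains_ball by blast
        have xD: "x \<in> closure D" using Dd by simp
        have e3: "e / 3 > 0" using e(1) by simp
        obtain d where d: "d \<in> D" "dist d x < e / 3"
          using xD e3 unfolding closure_approachable by blast
        obtain r where r: "r \<in> \<rat>" "e / 3 < r" "r < 2 * e / 3"
          using Rats_dense_in_real[of "e/3" "2*e/3"] e(1) by auto
        obtain q where q: "r = real_of_rat q" using r(1) Rats_cases by blast
        have qpos: "0 < q" using q r e(1) by (metis of_rat_less_0_iff not_less order.strict_trans zero_less_divide_iff zero_less_numeral less_eq_real_def  of_rat_0 of_rat_less)
        have "cball d r \<subseteq> ball x e"
        proof
          fix y assume "y \<in> cball d r"
          then have "dist d y \<le> r" by simp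
          then have "dist x y < e" using d(2) r(3) dist_triangle[of x y d] by (simp add: dist_commute)
          then show "y \<in> ball x e" by simp
        qed
        then have "(d, q) \<in> K" unfolding K_def using d(1) qpos e(2) q by auto
        moreover have "x \<in> cball d (real_of_rat q)" using d(2) r(2) q by simp
        ultimately show "x \<in> (\<Union>(d, q)\<in>K. cball d (real_of_rat q))" by blast
      qed
    qed
    have "X = \<Union>((\<lambda>(d, q). {t \<in> space M. \<phi> t \<in> cball d (real_of_rat q)}) ` K)"
      unfolding U(2) by (subst Ueq) (auto simp: case_prod_beta)
    also have "\<dots> \<in> sigma_sets (space M) G0"
    proof (rule sigma_sets_UNION)
      show "countable ((\<lambda>(d, q). {t \<in> space M. \<phi> t \<in> cball d (real_of_rat q)}) ` K)" using Kc by auto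
      show "b \<in> sigma_sets (space M) G0" if "b \<in> (\<lambda>(d, q). {t \<in> space M. \<phi> t \<in> cball d (real_of_rat q)}) ` K" for b
        using that unfolding G0_def K_def by (auto intro!: sigma_sets.Basic)
    qed
    finally show "X \<in> sigma_sets (space M) G0" .
  qed
  have AG0: "A = sigma_sets (space M) G0"
  proof
    show "A \<subseteq> sigma_sets (space M) G0" unfolding A_def by (rule sigma_sets_mono[OF GG0])
    show "sigma_sets (space M) G0 \<subseteq> A" unfolding A_def by (rule sigma_sets_mono[OF G0A[unfolded A_def]])
  qed
  have Asets: "A \<subseteq> sets M" unfolding AG0 by (rule sets.sigma_sets_subset[OF G0sets])
  define g where "g = from_nat_into G0"
  define Alg where "Alg = range (ev (space M) g)"
  have grange: "range g \<subseteq> sigma_sets (space M) G0"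
    unfolding g_def using from_nat_into[OF G0ne] by (auto intro: sigma_sets.Basic)
  have AlgA: "Alg \<subseteq> A" unfolding Alg_def AG0 using ev_sigma[OF grange] by auto
  have Algc: "countable Alg" unfolding Alg_def by simp
  have approx: "\<forall>e>0. \<exists>H\<in>Alg. measure M (((E - H) \<union> (H - E)) \<inter> F) < e"
    if "F \<in> fmeasurable M" "E \<in> A" for E F
  proof (rule approx_sigma)
    show "Alg \<subseteq> sets M" using AlgA Asets by blast
    show "{} \<in> Alg" unfolding Alg_def by (rule image_eqI[where x=EEmp]) auto
    show "space M - a \<in> Alg" if a: "a \<in> Alg" for a
    proof -
      obtain x where "a = ev (space M) g x" using a unfolding Alg_def by blast
      then show ?thesis unfolding Alg_def by (intro image_eqI[where x="ECp x"]) auto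
    qed
    show "a \<union> b \<in> Alg" if ab: "a \<in> Alg" "b \<in> Alg" for a b
    proof -
      obtain x where "a = ev (space M) g x" using ab unfolding Alg_def by blast
      moreover obtain y where "b = ev (space M) g y" using ab unfolding Alg_def by blast
      ultimately show ?thesis unfolding Alg_def by (intro image_eqI[where x="EUn x y"]) auto
    qed
    show "G0 \<subseteq> Alg"
    proof
      fix X assume "X \<in> G0"
      then obtain n where "X = g n" unfolding g_def using from_nat_into_surj[OF G0c] by blast
      then show "X \<in> Alg" unfolding Alg_def by (intro image_eqI[where x="EB n"]) auto
    qed
    show "F \<in> fmeasurable M" by fact
    show "E \<in> sigma_sets (space M) G0" using that AG0 by simp
  qed
  define S where "S f n = {t \<in> space M. 1 \<le> real (Suc n) * (inner f (\<phi> t))\<^sup>2}" for f n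
  define Z where "Z = {t \<in> space M. \<phi> t = 0}"
  have SA: "S f n \<in> A" for f n
  proof -
    have "open (- {y. 1 \<le> real (Suc n) * (inner f y)\<^sup>2})"
      by (intro open_Compl closed_Collect_le continuous_intros)
    then have "{t \<in> space M. \<phi> t \<in> - {y. 1 \<le> real (Suc n) * (inner f y)\<^sup>2}} \<in> G" unfolding G_def by blast
    then have "space M - {t \<in> space M. \<phi> t \<in> - {y. 1 \<le> real (Suc n) * (inner f y)\<^sup>2}} \<in> A"
      unfolding A_def by (blast intro: sigma_sets.intros)
    moreover have "space M - {t \<in> space M. \<phi> t \<in> - {y. 1 \<le> real (Suc n) * (inner f y)\<^sup>2}} = S f n"
      unfolding S_def by auto
    ultimately show ?thesis by simp
  qed
  have ZA: "Z \<in> A"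
  proof -
    have "{t \<in> space M. \<phi> t \<in> - {0}} \<in> G" unfolding G_def by blast
    then have "space M - {t \<in> space M. \<phi> t \<in> - {0}} \<in> A" unfolding A_def by (blast intro: sigma_sets.intros)
    moreover have "space M - {t \<in> space M. \<phi> t \<in> - {0}} = Z" unfolding Z_def by auto
    ultimately show ?thesis by simp
  qed
  define Fs where "Fs = (\<lambda>(f, n). S f n) ` (D \<times> UNIV) \<union> (if emeasure M Z < \<infinity> then {Z} else {})"
  have Fsc: "countable Fs" unfolding Fs_def using Dc by auto
  have Fsne: "Fs \<noteq> {}" unfolding Fs_def using Dne by auto
  have FsA: "Fs \<subseteq> A" unfolding Fs_def using SA ZA by auto
  have Fsfm: "Fs \<subseteq> fmeasurable M"
  proof
    fix X assume "X \<in> Fs"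
    moreover have "S f n \<in> fmeasurable M" for f n
      using level_finite[OF bessel, of n f] SA[of f n] Asets unfolding S_def fmeasurable_def by auto
    moreover have "Z \<in> sets M" using ZA Asets by auto
    ultimately show "X \<in> fmeasurable M" unfolding Fs_def by (auto simp: fmeasurable_def split: if_splits)
  qed
  define Fseq where "Fseq k = (\<Union>i\<le>k. from_nat_into Fs i)" for k
  have fnFs: "from_nat_into Fs i \<in> Fs" for i using from_nat_into[OF Fsne] .
  have FseqA: "Fseq k \<in> A" for k
    unfolding Fseq_def A_def using fnFs FsA unfolding A_def by (intro sigma_sets_UNION) auto
  have Fseqfm: "Fseq k \<in> fmeasurable M" for k
    unfolding Fseq_def using fnFs Fsfm by (intro fmeasurable.finite_UN) auto
  have FseqU: "(\<Union>k. Fseq k) = \<Union>Fs"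
  proof
    show "(\<Union>k. Fseq k) \<subseteq> \<Union>Fs" unfolding Fseq_def using fnFs by blast
    show "\<Union>Fs \<subseteq> (\<Union>k. Fseq k)"
    proof
      fix x assume "x \<in> \<Union>Fs"
      then obtain X where "X \<in> Fs" "x \<in> X" by blast
      then obtain i where "X = from_nat_into Fs i" using from_nat_into_surj[OF Fsc] by blast
      then show "x \<in> (\<Union>k. Fseq k)" unfolding Fseq_def using \<open>x \<in> X\<close> by blast
    qed
  qed
  have cover: "E \<subseteq> \<Union>Fs" if E: "E \<in> A" "emeasure M E < \<infinity>" for E
  proof
    fix t assume t: "t \<in> E"
    have Es: "E \<subseteq> space M" using E Asets sets.sets_into_space by blast
    show "t \<in> \<Union>Fs"
    proof (cases "\<phi> t = 0")
      case False
      then obtain f where f: "f \<in> D" "inner f (\<phi> t) \<noteq> 0" using nonzero_witness[OF Dd] by blast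
      have pos: "(inner f (\<phi> t))\<^sup>2 > 0" using f(2) by simp
      obtain n where n: "1 / (inner f (\<phi> t))\<^sup>2 < real n" using reals_Archimedean2 by blast
      have "1 \<le> real (Suc n) * (inner f (\<phi> t))\<^sup>2"
      proof -
        have "1 < real n * (inner f (\<phi> t))\<^sup>2" using n pos by (simp add: divide_less_eq)
        moreover have "real (Suc n) * (inner f (\<phi> t))\<^sup>2 = (inner f (\<phi> t))\<^sup>2 + real n * (inner f (\<phi> t))\<^sup>2"
          by (simp add: algebra_simps)
        ultimately show ?thesis using pos by linarith
      qed
      then have "t \<in> S f n" unfolding S_def using t Es by auto
      moreover have "S f n \<in> Fs" unfolding Fs_def using f(1) by auto
      ultimately show ?thesis by blast
    next
      case True
      have "E \<in> sigma_sets (space M) {{t \<in> space M. \<phi> t \<in> U} | U. open U}" using E(1) unfolding A_def G_def .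
      then obtain S0 where S0: "E = {t \<in> space M. \<phi> t \<in> S0}" using preimage_form by blast
      have "0 \<in> S0" using t True S0 by auto
      then have ZE: "Z \<subseteq> E" unfolding Z_def S0 by auto
      have "emeasure M Z \<le> emeasure M E" using ZE E(1) Asets by (intro emeasure_mono) auto
      then have "emeasure M Z < \<infinity>" using E(2) by (meson le_less_trans)
      then have "Z \<in> Fs" unfolding Fs_def by auto
      moreover have "t \<in> Z" unfolding Z_def using t Es True by auto
      ultimately show ?thesis by blast
    qed
  qed
  define DD where "DD = (\<lambda>(H, k). H \<inter> Fseq k) ` (Alg \<times> UNIV)"
  have DDc: "countable DD" unfolding DD_def using Algc by auto
  have DDsub: "DD \<subseteq> {E \<in> A. emeasure M E < \<infinity>}"
  proof
    fix X assume "X \<in> DD"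
    then obtain H k where X: "X = H \<inter> Fseq k" "H \<in> Alg" unfolding DD_def by auto
    have "H \<in> A" using X(2) AlgA by blast
    have sa: "sigma_algebra (space M) A" unfolding A_def by (rule sigma_algebra_sigma_sets) (auto simp: G_def)
    interpret sa: sigma_algebra "space M" A by (rule sa)
    have XA: "X \<in> A" unfolding X(1) using sa.Int[OF \<open>H \<in> A\<close> FseqA[of k]] .
    have Xs: "X \<in> sets M" using XA Asets by blast
    have "X \<subseteq> Fseq k" unfolding X(1) by blast
    with Fseqfm[of k] have "X \<in> fmeasurable M" using Xs by (rule fmeasurableI2)
    then have "emeasure M X < \<infinity>" by (simp add: fmeasurable_def)
    then show "X \<in> {E \<in> A. emeasure M E < \<infinity>}" using XA by blast
  qed
  have dense: "\<exists>F\<in>DD. emeasure M ((E - F) \<union> (F - E)) < ennreal e"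
    if E: "E \<in> A" "emeasure M E < \<infinity>" and e: "e > 0" for E e
  proof -
    have Es: "E \<in> sets M" using E Asets by blast
    have Efm: "E \<in> fmeasurable M" using E Es by (simp add: fmeasurable_def)
    define T where "T k = E - Fseq k" for k
    have Fsk: "Fseq k \<in> sets M" for k using Fseqfm[of k] by (simp add: fmeasurable_def)
    have Tsets: "range T \<subseteq> sets M" unfolding T_def using Es Fsk by (intro image_subsetI sets.Diff)
    have Tdec: "decseq T" by (rule decseq_SucI) (auto simp: T_def Fseq_def atMost_Suc)
    have Tfin: "emeasure M (T k) \<noteq> \<infinity>" for k
    proof -
      have "emeasure M (T k) \<le> emeasure M E" using Es by (intro emeasure_mono) (auto simp: T_def)
      then show ?thesis using E(2) by (metis infinity_ennreal_def le_less_trans less_irrefl)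
    qed
    have Tint: "(\<Inter>k. T k) = {}" using cover[OF E] FseqU unfolding T_def by blast
    have "(\<lambda>k. measure M (T k)) \<longlonglongrightarrow> 0" using Lim_measure_decseq[OF Tsets Tdec Tfin] Tint by simp
    then obtain k where k: "measure M (T k) < e / 2"
      using e by (metis (no_types, lifting) LIMSEQ_D abs_of_nonneg diff_zero half_gt_zero le_refl measure_nonneg real_norm_def)
    obtain H where H: "H \<in> Alg" "measure M (((E - H) \<union> (H - E)) \<inter> Fseq k) < e / 2"
      using approx[OF Fseqfm[of k] E(1)] e by (meson half_gt_zero)
    have Hs: "H \<in> sets M" using H(1) AlgA Asets by blast
    have Fs': "Fseq k \<in> sets M" using Fseqfm by (simp add: fmeasurable_def)
    let ?X = "(E - H \<inter> Fseq k) \<union> (H \<inter> Fseq k - E)"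
    have sub: "?X \<subseteq> (((E - H) \<union> (H - E)) \<inter> Fseq k) \<union> T k" unfolding T_def by blast
    have s1: "((E - H) \<union> (H - E)) \<inter> Fseq k \<in> sets M" using Es Hs Fs' by (intro sets.Int sets.Un sets.Diff)
    have s2: "T k \<in> sets M" using Tsets by blast
    have Xs: "?X \<in> sets M" using Es Hs Fs' by (intro sets.Int sets.Un sets.Diff)
    have Ufm: "(((E - H) \<union> (H - E)) \<inter> Fseq k) \<union> T k \<in> fmeasurable M"
    proof (rule fmeasurableI2)
      show "E \<union> Fseq k \<in> fmeasurable M" using Efm Fseqfm[of k] by (rule fmeasurable.Un)
      show "(((E - H) \<union> (H - E)) \<inter> Fseq k) \<union> T k \<subseteq> E \<union> Fseq k" unfolding T_def by blast
      show "(((E - H) \<union> (H - E)) \<inter> Fseq k) \<union> T k \<in> sets M" using s1 s2 by (rule sets.Un)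
    qed
    have Xfm: "?X \<in> fmeasurable M" using Ufm sub Xs by (rule fmeasurableI2)
    have "measure M ?X \<le> measure M ((((E - H) \<union> (H - E)) \<inter> Fseq k) \<union> T k)"
      using sub Xs Ufm by (rule measure_mono_fmeasurable)
    also have "\<dots> \<le> measure M (((E - H) \<union> (H - E)) \<inter> Fseq k) + measure M (T k)"
      using s1 s2 by (rule measure_Un_le)
    also have "\<dots> < e" using H(2) k by linarith
    finally have "measure M ?X < e" .
    then have "emeasure M ?X < ennreal e"
      using Xfm e by (simp add: emeasure_eq_measure2 ennreal_lessI)
    moreover have "H \<inter> Fseq k \<in> DD" unfolding DD_def using H(1) by (intro image_eqI[where x="(H, k)"]) auto
    ultimately show ?thesis by blast
  qed
  have Aeq: "sigma_sets (space M) {{t \<in> space M. \<phi> t \<in> U} | U. open U} = A" unfolding A_def G_def ..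
  have "separable_measure_algebra M A"
    unfolding separable_measure_algebra_def
  proof (intro exI[of _ DD] conjI DDc DDsub ballI allI impI)
    fix E e assume "E \<in> A" "emeasure M E < \<infinity>" "(0::real) < e"
    then show "\<exists>F\<in>DD. emeasure M ((E - F) \<union> (F - E)) < ennreal e" by (rule dense)
  qed
  then show ?thesis unfolding Aeq using Asets by (rule conjI[rotated])
qed

end
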